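(* The distribution $P_{ABC}$ on $\{0,1\}^3$ given by $P_{ABC}(abc)=1/3$ if $a+b+c=1$ and $0$ otherwise is not compatible with the Triangle scenario.
   Context: The Triangle scenario is the causal structure with observed nodes $A,B,C$, latent nodes $X,Y,Z$ and edges $X\to A$, $X\to B$, $Y\to A$, $Y\to C$, $Z\to B$, $Z\to C$. A distribution $P_{ABC}$ is compatible with it if there exist distributions $P_X,P_Y,P_Z$ (latent variables of arbitrary cardinality) and conditionals $P_{A|XY},P_{B|XZ},P_{C|YZ}$ such that $P_{ABC}$ is the marginal of $P_XP_YP_ZP_{A|XY}P_{B|XZ}P_{C|YZ}$. *)

theory Defs
  imports "HOL-Probability.Probability"
begin

text \<open>Outcomes of the observed variables A, B, C are bits, encoded as bool (True = 1).
  Latent variables X, Y, Z live in arbitrary measurable spaces (arbitrary types, hence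
  arbitrary cardinality) with probability measures MX, MY, MZ.\<close>

definition bit_kernel :: "('u \<times> 'v) measure \<Rightarrow> ('u \<Rightarrow> 'v \<Rightarrow> bool \<Rightarrow> real) \<Rightarrow> bool" where
  "bit_kernel M k \<longleftrightarrow>
     (\<forall>a. (\<lambda>(u,v). k u v a) \<in> borel_measurable M) \<and>
     (\<forall>u v a. 0 \<le> k u v a) \<and>
     (\<forall>u v. k u v False + k u v True = 1)"

definition triangle_model ::
  "'x measure \<Rightarrow> 'y measure \<Rightarrow> 'z measure \<Rightarrow>
   ('x \<Rightarrow> 'y \<Rightarrow> bool \<Rightarrow> real) \<Rightarrow> ('x \<Rightarrow> 'z \<Rightarrow> bool \<Rightarrow> real) \<Rightarrow> ('y \<Rightarrow> 'z \<Rightarrow> bool \<Rightarrow> real) \<Rightarrow>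
   (bool \<Rightarrow> bool \<Rightarrow> bool \<Rightarrow> real) \<Rightarrow> bool" where
  "triangle_model MX MY MZ pA pB pC P \<longleftrightarrow>
     prob_space MX \<and> prob_space MY \<and> prob_space MZ \<and>
     bit_kernel (MX \<Otimes>\<^sub>M MY) pA \<and>
     bit_kernel (MX \<Otimes>\<^sub>M MZ) pB \<and>
     bit_kernel (MY \<Otimes>\<^sub>M MZ) pC \<and>
     (\<forall>a b c. P a b c =
        (\<integral>w. (case w of (x, y, z) \<Rightarrow> pA x y a * pB x z b * pC y z c)
           \<partial>(MX \<Otimes>\<^sub>M (MY \<Otimes>\<^sub>M MZ))))"

text \<open>Since
  latent spaces are types, the existential over them is expressed by the negated
  statement being universally quantified over the type variables.\<close>

definition W_dist :: "bool \<Rightarrow> bool \<Rightarrow> bool \<Rightarrow> real" where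
  "W_dist a b c = (if of_bool a + of_bool b + of_bool c = (1::nat) then 1/3 else 0)"

end

theory Submission
  imports Defs
begin

lemma int_bounded:
  fixes f :: "'a \<Rightarrow> real"
  assumes "prob_space M" "f \<in> borel_measurable M" "\<And>w. \<bar>f w\<bar> \<le> B"
  shows "integrable M f"
proof -
  interpret prob_space M by fact
  show ?thesis using assms(2,3) by (intro integrable_const_bound[where B=B]) auto
qed

lemma iter1:
  fixes f :: "'x \<times> 'y \<times> 'z \<Rightarrow> real"
  assumes X: "prob_space MX" and Y: "prob_space MY" and Z: "prob_space MZ"
    and f[measurable]: "f \<in> borel_measurable (MX \<Otimes>\<^sub>M (MY \<Otimes>\<^sub>M MZ))" and b: "\<And>w. \<bar>f w\<bar> \<le> B"
  shows "integral\<^sup>L (MX \<Otimes>\<^sub>M (MY \<Otimes>\<^sub>M MZ)) f = (\<integral>x. \<integral>y. \<integral>z. f (x,(y,z)) \<partial>MZ \<partial>MY \<partial>MX)"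
proof -
  interpret X: prob_space MX by fact
  interpret Y: prob_space MY by fact
  interpret Z: prob_space MZ by fact
  interpret YZ: pair_prob_space MY MZ ..
  have N: "prob_space (MY \<Otimes>\<^sub>M MZ)" by (rule YZ.P.prob_space_axioms)
  interpret N: prob_space "MY \<Otimes>\<^sub>M MZ" by (rule N)
  interpret XN: pair_prob_space MX "MY \<Otimes>\<^sub>M MZ" ..
  have "integrable (MX \<Otimes>\<^sub>M (MY \<Otimes>\<^sub>M MZ)) f"
    by (rule int_bounded[OF XN.P.prob_space_axioms f b])
  then have "integral\<^sup>L (MX \<Otimes>\<^sub>M (MY \<Otimes>\<^sub>M MZ)) f = (\<integral>x. (\<integral>w. f (x, w) \<partial>(MY \<Otimes>\<^sub>M MZ)) \<partial>MX)"
    by (rule XN.integral_fst'[symmetric])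
  also have "\<dots> = (\<integral>x. \<integral>y. \<integral>z. f (x,(y,z)) \<partial>MZ \<partial>MY \<partial>MX)"
  proof (rule Bochner_Integration.integral_cong[OF refl])
    fix x assume x: "x \<in> space MX"
    have i: "integrable (MY \<Otimes>\<^sub>M MZ) (\<lambda>w. f (x, w))"
      by (rule int_bounded[OF N _ b]) (rule measurable_Pair2[OF f x])
    show "(\<integral>w. f (x, w) \<partial>(MY \<Otimes>\<^sub>M MZ)) = (\<integral>y. \<integral>z. f (x,(y,z)) \<partial>MZ \<partial>MY)"
      using YZ.integral_fst'[OF i] by simp
  qed
  finally show ?thesis .
qed

lemma iter2:
  fixes f :: "'x \<times> 'y \<times> 'z \<Rightarrow> real"
  assumes X: "prob_space MX" and Y: "prob_space MY" and Z: "prob_space MZ"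
    and f[measurable]: "f \<in> borel_measurable (MX \<Otimes>\<^sub>M (MY \<Otimes>\<^sub>M MZ))" and b: "\<And>w. \<bar>f w\<bar> \<le> B"
  shows "integral\<^sup>L (MX \<Otimes>\<^sub>M (MY \<Otimes>\<^sub>M MZ)) f = (\<integral>y. \<integral>z. \<integral>x. f (x,(y,z)) \<partial>MX \<partial>MZ \<partial>MY)"
proof -
  interpret X: prob_space MX by fact
  interpret Y: prob_space MY by fact
  interpret Z: prob_space MZ by fact
  interpret YZ: pair_prob_space MY MZ ..
  have N: "prob_space (MY \<Otimes>\<^sub>M MZ)" by (rule YZ.P.prob_space_axioms)
  interpret N: prob_space "MY \<Otimes>\<^sub>M MZ" by (rule N)
  interpret XN: pair_prob_space MX "MY \<Otimes>\<^sub>M MZ" ..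
  have i: "integrable (MX \<Otimes>\<^sub>M (MY \<Otimes>\<^sub>M MZ)) (\<lambda>(x,w). f (x,w))"
    using int_bounded[OF XN.P.prob_space_axioms f b] by simp
  have "integral\<^sup>L (MX \<Otimes>\<^sub>M (MY \<Otimes>\<^sub>M MZ)) f = (\<integral>w. (\<integral>x. f (x, w) \<partial>MX) \<partial>(MY \<Otimes>\<^sub>M MZ))"
    using XN.integral_snd[OF i] by simp
  also have "\<dots> = (\<integral>y. \<integral>z. \<integral>x. f (x,(y,z)) \<partial>MX \<partial>MZ \<partial>MY)"
  proof -
    have "integrable (MY \<Otimes>\<^sub>M MZ) (\<lambda>w. (\<integral>x. f (x, w) \<partial>MX))"
    proof (rule int_bounded[OF N, where B=B])
      show "(\<lambda>w. \<integral>x. f (x, w) \<partial>MX) \<in> borel_measurable (MY \<Otimes>\<^sub>M MZ)"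
        by measurable
      fix w
      have "\<bar>\<integral>x. f (x, w) \<partial>MX\<bar> \<le> (\<integral>x. \<bar>f (x, w)\<bar> \<partial>MX)" by (rule integral_abs_bound)
      also have "\<dots> \<le> B"
      proof (cases "integrable MX (\<lambda>x. \<bar>f (x, w)\<bar>)")
        case True
        then show ?thesis using b by (intro X.integral_le_const) auto
      next
        case False
        then show ?thesis using b[of "(undefined, w)"] by (simp add: not_integrable_integral_eq)
      qed
      finally show "\<bar>\<integral>x. f (x, w) \<partial>MX\<bar> \<le> B" .
    qed
    from YZ.integral_fst'[OF this] show ?thesis by simp
  qed
  finally show ?thesis .
qed


lemma arith3:
  fixes a b c p q r :: real
  assumes "0\<le>a" "a\<le>1" "0\<le>b" "b\<le>1" "0\<le>c" "c\<le>1" "0\<le>p" "p\<le>1" "0\<le>q" "q\<le>1" "0\<le>r" "r\<le>1"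
  shows "p*q*r \<le> (1-a)*(1-b)*(1-c) + q*a + p*b + r*c"
proof -
  have u: "0 \<le> p*q*r" "p*q*r \<le> 1" "0 \<le> p*r" "p*r \<le> 1" "0 \<le> q*r" "q*r \<le> 1" "p*q \<le> 1" "0 \<le> p*q"
    using assms by (auto intro: mult_le_one)
  have abc: "a*b*c \<le> a*b" using assms by (simp add: mult_left_le)
  have s: "1 \<le> (1-a)*(1-b)*(1-c) + a + b + c"
    using assms abc by (simp add: algebra_simps) (smt (verit) mult_nonneg_nonneg)
  have d: "0 \<le> (1-a)*(1-b)*(1-c)" using assms by simp
  have "p*q*r \<le> p*q*r * ((1-a)*(1-b)*(1-c) + a + b + c)"
    using mult_left_mono[OF s u(1)] by simp
  also have "\<dots> = (p*q*r)*((1-a)*(1-b)*(1-c)) + (p*r)*(q*a) + (q*r)*(p*b) + (p*q)*(r*c)"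
    by (simp add: algebra_simps)
  also have "\<dots> \<le> (1-a)*(1-b)*(1-c) + q*a + p*b + r*c"
  proof -
    have "(p*q*r)*((1-a)*(1-b)*(1-c)) \<le> (1-a)*(1-b)*(1-c)" using u d mult_left_le_one_le by blast
    moreover have "(p*r)*(q*a) \<le> q*a" using u assms by (simp add: mult_left_le_one_le)
    moreover have "(q*r)*(p*b) \<le> p*b" using u assms by (simp add: mult_left_le_one_le)
    moreover have "(p*q)*(r*c) \<le> r*c" using u assms by (simp add: mult_left_le_one_le)
    ultimately show ?thesis by linarith
  qed
  finally show ?thesis .
qed

lemma int01:
  fixes g :: "'a \<Rightarrow> real"
  assumes "prob_space N" "\<And>y. 0 \<le> g y \<and> g y \<le> 1"
  shows "0 \<le> integral\<^sup>L N g \<and> integral\<^sup>L N g \<le> 1"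
proof -
  interpret prob_space N by fact
  have "integral\<^sup>L N g \<le> 1"
  proof (cases "integrable N g")
    case True then show ?thesis using assms(2) by (intro integral_le_const) auto
  next
    case False then show ?thesis by (simp add: not_integrable_integral_eq)
  qed
  moreover have "0 \<le> integral\<^sup>L N g" using assms(2) by simp
  ultimately show ?thesis by simp
qed

theorem mainTheorem9:
  fixes MX :: "'x measure" and MY :: "'y measure" and MZ :: "'z measure"
    and pA :: "'x \<Rightarrow> 'y \<Rightarrow> bool \<Rightarrow> real"
    and pB :: "'x \<Rightarrow> 'z \<Rightarrow> bool \<Rightarrow> real"
    and pC :: "'y \<Rightarrow> 'z \<Rightarrow> bool \<Rightarrow> real"
  shows "\<not> triangle_model MX MY MZ pA pB pC W_dist"
proof
  assume T: "triangle_model MX MY MZ pA pB pC W_dist"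
  have X: "prob_space MX" and Y: "prob_space MY" and Z: "prob_space MZ"
    and kA: "bit_kernel (MX \<Otimes>\<^sub>M MY) pA" and kB: "bit_kernel (MX \<Otimes>\<^sub>M MZ) pB"
    and kC: "bit_kernel (MY \<Otimes>\<^sub>M MZ) pC"
    and P: "\<And>a b c. W_dist a b c =
        (\<integral>w. (case w of (x, y, z) \<Rightarrow> pA x y a * pB x z b * pC y z c)
           \<partial>(MX \<Otimes>\<^sub>M (MY \<Otimes>\<^sub>M MZ)))"
    using T unfolding triangle_model_def by auto
  interpret X: prob_space MX by fact
  interpret Y: prob_space MY by fact
  interpret Z: prob_space MZ by fact
  interpret YZ: pair_prob_space MY MZ ..
  have N: "prob_space (MY \<Otimes>\<^sub>M MZ)" by (rule YZ.P.prob_space_axioms)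
  interpret N: prob_space "MY \<Otimes>\<^sub>M MZ" by (rule N)
  interpret XN: pair_prob_space MX "MY \<Otimes>\<^sub>M MZ" ..
  define M where "M = MX \<Otimes>\<^sub>M (MY \<Otimes>\<^sub>M MZ)"
  have PM: "prob_space M" unfolding M_def by (rule XN.P.prob_space_axioms)
  have mA0[measurable]: "(\<lambda>(u,v). pA u v t) \<in> borel_measurable (MX \<Otimes>\<^sub>M MY)" for t
    using kA unfolding bit_kernel_def by auto
  have mB0[measurable]: "(\<lambda>(u,v). pB u v t) \<in> borel_measurable (MX \<Otimes>\<^sub>M MZ)" for t
    using kB unfolding bit_kernel_def by auto
  have mC0[measurable]: "(\<lambda>(u,v). pC u v t) \<in> borel_measurable (MY \<Otimes>\<^sub>M MZ)" for t
    using kC unfolding bit_kernel_def by auto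
  have A01: "0 \<le> pA u v t \<and> pA u v t \<le> 1" and Af: "pA u v False = 1 - pA u v True" for u v t
    using kA unfolding bit_kernel_def by (smt (verit))+
  have B01: "0 \<le> pB u v t \<and> pB u v t \<le> 1" and Bf: "pB u v False = 1 - pB u v True" for u v t
    using kB unfolding bit_kernel_def by (smt (verit))+
  have C01: "0 \<le> pC u v t \<and> pC u v t \<le> 1" and Cf: "pC u v False = 1 - pC u v True" for u v t
    using kC unfolding bit_kernel_def by (smt (verit))+
  define Aw where "Aw = (\<lambda>w::'x \<times> 'y \<times> 'z. pA (fst w) (fst (snd w)) True)"
  define Bw where "Bw = (\<lambda>w::'x \<times> 'y \<times> 'z. pB (fst w) (snd (snd w)) True)"
  define Cw where "Cw = (\<lambda>w::'x \<times> 'y \<times> 'z. pC (fst (snd w)) (snd (snd w)) True)"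
  have mA[measurable]: "Aw \<in> borel_measurable M"
    using measurable_compose[OF _ mA0[of True], of "\<lambda>w. (fst w, fst (snd w))" M]
    unfolding M_def Aw_def by simp
  have mB[measurable]: "Bw \<in> borel_measurable M"
    using measurable_compose[OF _ mB0[of True], of "\<lambda>w. (fst w, snd (snd w))" M]
    unfolding M_def Bw_def by simp
  have mC[measurable]: "Cw \<in> borel_measurable M"
    using measurable_compose[OF _ mC0[of True], of "\<lambda>w. (fst (snd w), snd (snd w))" M]
    unfolding M_def Cw_def by simp
  have Aw01: "0 \<le> Aw w" "Aw w \<le> 1" and Bw01: "0 \<le> Bw w" "Bw w \<le> 1"
    and Cw01: "0 \<le> Cw w" "Cw w \<le> 1" for w
    unfolding Aw_def Bw_def Cw_def using A01 B01 C01 by auto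
  have intI: "integrable M f" if "f \<in> borel_measurable M" "\<And>w. \<bar>f w\<bar> \<le> 4" for f :: "'x \<times> 'y \<times> 'z \<Rightarrow> real"
    by (rule int_bounded[OF PM that])
  have P': "W_dist a b c = integral\<^sup>L M (\<lambda>w. pA (fst w) (fst (snd w)) a *
        pB (fst w) (snd (snd w)) b * pC (fst (snd w)) (snd (snd w)) c)" for a b c
    unfolding M_def P[of a b c] by (rule arg_cong[where f="integral\<^sup>L _"]) (auto simp: fun_eq_iff)
  have intI01: "integrable M f" if "f \<in> borel_measurable M" "\<And>w. 0 \<le> f w" "\<And>w. f w \<le> 1"
    for f :: "'x \<times> 'y \<times> 'z \<Rightarrow> real"
    by (rule intI[OF that(1)]) (smt (verit) that(2,3))
  note ab = Aw01 Bw01 Cw01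
  have P111: "integral\<^sup>L M (\<lambda>w. Aw w * Bw w * Cw w) = 0"
    using P'[of True True True] by (simp add: Aw_def Bw_def Cw_def W_dist_def)
  have P110: "integral\<^sup>L M (\<lambda>w. Aw w * Bw w * (1 - Cw w)) = 0"
    using P'[of True True False] by (simp add: Aw_def Bw_def Cw_def W_dist_def Cf)
  have P101: "integral\<^sup>L M (\<lambda>w. Aw w * (1 - Bw w) * Cw w) = 0"
    using P'[of True False True] by (simp add: Aw_def Bw_def Cw_def W_dist_def Bf)
  have P011: "integral\<^sup>L M (\<lambda>w. (1 - Aw w) * Bw w * Cw w) = 0"
    using P'[of False True True] by (simp add: Aw_def Bw_def Cw_def W_dist_def Af)
  have P000: "integral\<^sup>L M (\<lambda>w. (1 - Aw w) * (1 - Bw w) * (1 - Cw w)) = 0"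
    using P'[of False False False] by (simp add: Aw_def Bw_def Cw_def W_dist_def Af Bf Cf)
  have P100: "integral\<^sup>L M (\<lambda>w. Aw w * (1 - Bw w) * (1 - Cw w)) = 1/3"
    using P'[of True False False] by (simp add: Aw_def Bw_def Cw_def W_dist_def Bf Cf)
  have P010: "integral\<^sup>L M (\<lambda>w. (1 - Aw w) * Bw w * (1 - Cw w)) = 1/3"
    using P'[of False True False] by (simp add: Aw_def Bw_def Cw_def W_dist_def Af Cf)
  have P001: "integral\<^sup>L M (\<lambda>w. (1 - Aw w) * (1 - Bw w) * Cw w) = 1/3"
    using P'[of False False True] by (simp add: Aw_def Bw_def Cw_def W_dist_def Af Bf)
  have i3: "integrable M (\<lambda>w. f1 (Aw w) * f2 (Bw w) * f3 (Cw w))"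
    if "f1 \<in> {\<lambda>t. t, \<lambda>t. 1 - t}" "f2 \<in> {\<lambda>t. t, \<lambda>t. 1 - t}" "f3 \<in> {\<lambda>t. t, \<lambda>t. 1 - t}" for f1 f2 f3
  proof (rule intI01)
    show "(\<lambda>w. f1 (Aw w) * f2 (Bw w) * f3 (Cw w)) \<in> borel_measurable M"
      using that by auto
    fix w
    have h: "0 \<le> f1 (Aw w)" "f1 (Aw w) \<le> 1" "0 \<le> f2 (Bw w)" "f2 (Bw w) \<le> 1" "0 \<le> f3 (Cw w)" "f3 (Cw w) \<le> 1"
      using that ab[of w] by auto
    show "0 \<le> f1 (Aw w) * f2 (Bw w) * f3 (Cw w)" using h by simp
    show "f1 (Aw w) * f2 (Bw w) * f3 (Cw w) \<le> 1" using h by (simp add: mult_le_one)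
  qed
  have eAB: "integral\<^sup>L M (\<lambda>w. Aw w * Bw w) = 0"
  proof -
    have "integral\<^sup>L M (\<lambda>w. Aw w * Bw w) = integral\<^sup>L M (\<lambda>w. Aw w * Bw w * Cw w + Aw w * Bw w * (1 - Cw w))"
      by (simp add: algebra_simps)
    also have "\<dots> = 0" using i3[of "\<lambda>t. t" "\<lambda>t. t" "\<lambda>t. t"] i3[of "\<lambda>t. t" "\<lambda>t. t" "\<lambda>t. 1 - t"] P111 P110
      by simp
    finally show ?thesis .
  qed
  have eAC: "integral\<^sup>L M (\<lambda>w. Aw w * Cw w) = 0"
  proof -
    have "integral\<^sup>L M (\<lambda>w. Aw w * Cw w) = integral\<^sup>L M (\<lambda>w. Aw w * Bw w * Cw w + Aw w * (1 - Bw w) * Cw w)"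
      by (simp add: algebra_simps)
    also have "\<dots> = 0" using i3[of "\<lambda>t. t" "\<lambda>t. t" "\<lambda>t. t"] i3[of "\<lambda>t. t" "\<lambda>t. 1 - t" "\<lambda>t. t"] P111 P101
      by simp
    finally show ?thesis .
  qed
  have eBC: "integral\<^sup>L M (\<lambda>w. Bw w * Cw w) = 0"
  proof -
    have "integral\<^sup>L M (\<lambda>w. Bw w * Cw w) = integral\<^sup>L M (\<lambda>w. Aw w * Bw w * Cw w + (1 - Aw w) * Bw w * Cw w)"
      by (simp add: algebra_simps)
    also have "\<dots> = 0" using i3[of "\<lambda>t. t" "\<lambda>t. t" "\<lambda>t. t"] i3[of "\<lambda>t. 1 - t" "\<lambda>t. t" "\<lambda>t. t"] P111 P011
      by simp
    finally show ?thesis .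
  qed
  have IA: "integral\<^sup>L M Aw = 1/3"
  proof -
    have "integral\<^sup>L M Aw = integral\<^sup>L M (\<lambda>w. Aw w * (1 - Bw w) * (1 - Cw w) + Aw w * Bw w * (1 - Cw w)
        + Aw w * (1 - Bw w) * Cw w + Aw w * Bw w * Cw w)"
      by (rule arg_cong[where f="integral\<^sup>L M"]) (simp add: fun_eq_iff algebra_simps)
    also have "\<dots> = 1/3" using i3[of "\<lambda>t. t" "\<lambda>t. 1 - t" "\<lambda>t. 1 - t"] i3[of "\<lambda>t. t" "\<lambda>t. t" "\<lambda>t. 1 - t"]
      i3[of "\<lambda>t. t" "\<lambda>t. 1 - t" "\<lambda>t. t"] i3[of "\<lambda>t. t" "\<lambda>t. t" "\<lambda>t. t"] P100 P110 P101 P111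
      by simp
    finally show ?thesis .
  qed
  have IB: "integral\<^sup>L M Bw = 1/3"
  proof -
    have "integral\<^sup>L M Bw = integral\<^sup>L M (\<lambda>w. (1 - Aw w) * Bw w * (1 - Cw w) + Aw w * Bw w * (1 - Cw w)
        + (1 - Aw w) * Bw w * Cw w + Aw w * Bw w * Cw w)"
      by (rule arg_cong[where f="integral\<^sup>L M"]) (simp add: fun_eq_iff algebra_simps)
    also have "\<dots> = 1/3" using i3[of "\<lambda>t. 1 - t" "\<lambda>t. t" "\<lambda>t. 1 - t"] i3[of "\<lambda>t. t" "\<lambda>t. t" "\<lambda>t. 1 - t"]
      i3[of "\<lambda>t. 1 - t" "\<lambda>t. t" "\<lambda>t. t"] i3[of "\<lambda>t. t" "\<lambda>t. t" "\<lambda>t. t"] P010 P110 P011 P111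
      by simp
    finally show ?thesis .
  qed
  have IC: "integral\<^sup>L M Cw = 1/3"
  proof -
    have "integral\<^sup>L M Cw = integral\<^sup>L M (\<lambda>w. (1 - Aw w) * (1 - Bw w) * Cw w + Aw w * (1 - Bw w) * Cw w
        + (1 - Aw w) * Bw w * Cw w + Aw w * Bw w * Cw w)"
      by (rule arg_cong[where f="integral\<^sup>L M"]) (simp add: fun_eq_iff algebra_simps)
    also have "\<dots> = 1/3" using i3[of "\<lambda>t. 1 - t" "\<lambda>t. 1 - t" "\<lambda>t. t"] i3[of "\<lambda>t. t" "\<lambda>t. 1 - t" "\<lambda>t. t"]
      i3[of "\<lambda>t. 1 - t" "\<lambda>t. t" "\<lambda>t. t"] i3[of "\<lambda>t. t" "\<lambda>t. t" "\<lambda>t. t"] P001 P101 P011 P111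
      by simp
    finally show ?thesis .
  qed
  define al where "al x = (\<integral>y. pA x y True \<partial>MY)" for x
  define ga where "ga y = (\<integral>z. pC y z True \<partial>MZ)" for y
  define be where "be z = (\<integral>x. pB x z True \<partial>MX)" for z
  have mal[measurable]: "al \<in> borel_measurable MX"
    unfolding al_def[abs_def] by measurable
  have mga[measurable]: "ga \<in> borel_measurable MY"
    unfolding ga_def[abs_def] by measurable
  have mB1: "(\<lambda>(z,x). pB x z True) \<in> borel_measurable (MZ \<Otimes>\<^sub>M MX)"
    using measurable_compose[OF measurable_pair_swap' mB0[of True]] by (simp add: split_beta)
  have mbe[measurable]: "be \<in> borel_measurable MZ"
    unfolding be_def[abs_def] using X.borel_measurable_lebesgue_integral[OF mB1] by simp
  have al01: "0 \<le> al x \<and> al x \<le> 1" for x unfolding al_def by (rule int01[OF Y]) (use A01 in auto)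
  have ga01: "0 \<le> ga x \<and> ga x \<le> 1" for x unfolding ga_def by (rule int01[OF Z]) (use C01 in auto)
  have be01: "0 \<le> be x \<and> be x \<le> 1" for x unfolding be_def by (rule int01[OF X]) (use B01 in auto)
  have it1: "integral\<^sup>L M f = (\<integral>x. \<integral>y. \<integral>z. f (x,(y,z)) \<partial>MZ \<partial>MY \<partial>MX)"
    if "f \<in> borel_measurable M" "\<And>w. 0 \<le> f w" "\<And>w. f w \<le> 1" for f :: "'x \<times> 'y \<times> 'z \<Rightarrow> real"
    unfolding M_def by (rule iter1[OF X Y Z, where B=1]) (use that in \<open>auto simp: M_def\<close>)
  have it2: "integral\<^sup>L M f = (\<integral>y. \<integral>z. \<integral>x. f (x,(y,z)) \<partial>MX \<partial>MZ \<partial>MY)"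
    if "f \<in> borel_measurable M" "\<And>w. 0 \<le> f w" "\<And>w. f w \<le> 1" for f :: "'x \<times> 'y \<times> 'z \<Rightarrow> real"
    unfolding M_def by (rule iter2[OF X Y Z, where B=1]) (use that in \<open>auto simp: M_def\<close>)
  have mwt[measurable]: "(\<lambda>w. al (fst w) * ga (fst (snd w)) * be (snd (snd w))) \<in> borel_measurable M"
    unfolding M_def by measurable
  have m1[measurable]: "(\<lambda>w. ga (fst (snd w)) * Aw w) \<in> borel_measurable M"
    unfolding M_def using mA unfolding M_def by measurable
  have m2[measurable]: "(\<lambda>w. al (fst w) * Bw w) \<in> borel_measurable M"
    unfolding M_def using mB unfolding M_def by measurable
  have m3[measurable]: "(\<lambda>w. be (snd (snd w)) * Cw w) \<in> borel_measurable M"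
    unfolding M_def using mC unfolding M_def by measurable
  have Ial: "integral\<^sup>L MX al = 1/3"
  proof -
    have "integral\<^sup>L M Aw = (\<integral>x. \<integral>y. \<integral>z. Aw (x,(y,z)) \<partial>MZ \<partial>MY \<partial>MX)"
      by (rule it1) (use ab in auto)
    then show ?thesis using IA by (simp add: Aw_def al_def[abs_def] Z.prob_space)
  qed
  have Iga: "integral\<^sup>L MY ga = 1/3"
  proof -
    have "integral\<^sup>L M Cw = (\<integral>x. \<integral>y. \<integral>z. Cw (x,(y,z)) \<partial>MZ \<partial>MY \<partial>MX)"
      by (rule it1) (use ab in auto)
    then show ?thesis using IC by (simp add: Cw_def ga_def[abs_def] X.prob_space)
  qed
  have Ibe: "integral\<^sup>L MZ be = 1/3"
  proof -
    have "integral\<^sup>L M Bw = (\<integral>y. \<integral>z. \<integral>x. Bw (x,(y,z)) \<partial>MX \<partial>MZ \<partial>MY)"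
      by (rule it2) (use ab in auto)
    then show ?thesis using IB by (simp add: Bw_def be_def[abs_def] Y.prob_space)
  qed
  have Iwt: "integral\<^sup>L M (\<lambda>w. al (fst w) * ga (fst (snd w)) * be (snd (snd w))) = 1/27"
  proof -
    have "integral\<^sup>L M (\<lambda>w. al (fst w) * ga (fst (snd w)) * be (snd (snd w)))
       = (\<integral>x. \<integral>y. \<integral>z. al x * ga y * be z \<partial>MZ \<partial>MY \<partial>MX)"
      by (subst it1) (use al01 ga01 be01 in \<open>auto intro: mult_le_one\<close>)
    then show ?thesis using Ial Iga Ibe by simp
  qed
  have k1: "integral\<^sup>L M (\<lambda>w. ga (fst (snd w)) * Aw w) = 0"
  proof -
    have "integral\<^sup>L M (\<lambda>w. ga (fst (snd w)) * Aw w) = (\<integral>x. \<integral>y. \<integral>z. ga (fst (snd (x,y,z))) * Aw (x,y,z) \<partial>MZ \<partial>MY \<partial>MX)"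
      by (rule it1[of "\<lambda>w. ga (fst (snd w)) * Aw w"]) (use ga01 ab in \<open>auto intro: mult_le_one\<close>)
    also have "\<dots> = (\<integral>x. \<integral>y. pA x y True * ga y \<partial>MY \<partial>MX)"
      by (simp add: Aw_def Z.prob_space mult.commute)
    also have "\<dots> = (\<integral>x. \<integral>y. \<integral>z. Aw (x,y,z) * Cw (x,y,z) \<partial>MZ \<partial>MY \<partial>MX)"
      by (simp add: Aw_def Cw_def ga_def)
    also have "\<dots> = integral\<^sup>L M (\<lambda>w. Aw w * Cw w)"
      by (rule it1[symmetric, of "\<lambda>w. Aw w * Cw w"]) (use ab in \<open>auto intro: mult_le_one\<close>)
    finally show ?thesis using eAC by simp
  qed
  have k2: "integral\<^sup>L M (\<lambda>w. al (fst w) * Bw w) = 0"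
  proof -
    have "integral\<^sup>L M (\<lambda>w. al (fst w) * Bw w) = (\<integral>x. \<integral>y. \<integral>z. al (fst (x,y,z)) * Bw (x,y,z) \<partial>MZ \<partial>MY \<partial>MX)"
      by (rule it1[of "\<lambda>w. al (fst w) * Bw w"]) (use al01 ab in \<open>auto intro: mult_le_one\<close>)
    also have "\<dots> = (\<integral>x. al x * (\<integral>z. pB x z True \<partial>MZ) \<partial>MX)"
      by (simp add: Bw_def Y.prob_space)
    also have "\<dots> = (\<integral>x. \<integral>y. \<integral>z. Aw (x,y,z) * Bw (x,y,z) \<partial>MZ \<partial>MY \<partial>MX)"
      by (simp add: Aw_def Bw_def al_def)
    also have "\<dots> = integral\<^sup>L M (\<lambda>w. Aw w * Bw w)"
      by (rule it1[symmetric, of "\<lambda>w. Aw w * Bw w"]) (use ab in \<open>auto intro: mult_le_one\<close>)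
    finally show ?thesis using eAB by simp
  qed
  have k3: "integral\<^sup>L M (\<lambda>w. be (snd (snd w)) * Cw w) = 0"
  proof -
    have "integral\<^sup>L M (\<lambda>w. be (snd (snd w)) * Cw w) = (\<integral>y. \<integral>z. \<integral>x. be (snd (snd (x,y,z))) * Cw (x,y,z) \<partial>MX \<partial>MZ \<partial>MY)"
      by (rule it2[of "\<lambda>w. be (snd (snd w)) * Cw w"]) (use be01 ab in \<open>auto intro: mult_le_one\<close>)
    also have "\<dots> = (\<integral>y. \<integral>z. be z * pC y z True \<partial>MZ \<partial>MY)"
      by (simp add: Cw_def X.prob_space)
    also have "\<dots> = (\<integral>y. \<integral>z. \<integral>x. Bw (x,y,z) * Cw (x,y,z) \<partial>MX \<partial>MZ \<partial>MY)"
      by (simp add: Bw_def Cw_def be_def)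
    also have "\<dots> = integral\<^sup>L M (\<lambda>w. Bw w * Cw w)"
      by (rule it2[symmetric, of "\<lambda>w. Bw w * Cw w"]) (use ab in \<open>auto intro: mult_le_one\<close>)
    finally show ?thesis using eBC by simp
  qed
  have iw: "integrable M (\<lambda>w. al (fst w) * ga (fst (snd w)) * be (snd (snd w)))"
    by (rule intI01) (use al01 ga01 be01 in \<open>auto intro: mult_le_one\<close>)
  have ig1: "integrable M (\<lambda>w. ga (fst (snd w)) * Aw w)"
    by (rule intI01) (use ga01 ab in \<open>auto intro: mult_le_one\<close>)
  have ig2: "integrable M (\<lambda>w. al (fst w) * Bw w)"
    by (rule intI01) (use al01 ab in \<open>auto intro: mult_le_one\<close>)
  have ig3: "integrable M (\<lambda>w. be (snd (snd w)) * Cw w)"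
    by (rule intI01) (use be01 ab in \<open>auto intro: mult_le_one\<close>)
  have ig0: "integrable M (\<lambda>w. (1 - Aw w) * (1 - Bw w) * (1 - Cw w))"
    using i3[of "\<lambda>t. 1 - t" "\<lambda>t. 1 - t" "\<lambda>t. 1 - t"] by simp
  have "integral\<^sup>L M (\<lambda>w. al (fst w) * ga (fst (snd w)) * be (snd (snd w)))
      \<le> integral\<^sup>L M (\<lambda>w. (1 - Aw w) * (1 - Bw w) * (1 - Cw w) + ga (fst (snd w)) * Aw w
            + al (fst w) * Bw w + be (snd (snd w)) * Cw w)"
  proof (rule integral_mono[OF iw])
    show "integrable M (\<lambda>w. (1 - Aw w) * (1 - Bw w) * (1 - Cw w) + ga (fst (snd w)) * Aw w
            + al (fst w) * Bw w + be (snd (snd w)) * Cw w)"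
      using ig0 ig1 ig2 ig3 by auto
    fix w
    show "al (fst w) * ga (fst (snd w)) * be (snd (snd w)) \<le> (1 - Aw w) * (1 - Bw w) * (1 - Cw w) + ga (fst (snd w)) * Aw w
            + al (fst w) * Bw w + be (snd (snd w)) * Cw w"
      using al01[of "fst w"] ga01[of "fst (snd w)"] be01[of "snd (snd w)"] ab[of w]
      by (intro arith3) auto
  qed
  also have "\<dots> = 0" using ig0 ig1 ig2 ig3 P000 k1 k2 k3 by simp
  finally show False using Iwt by simp
qed

end
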